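(* Let $L$ and $K$ be complete lattices and suppose $L$ is a parametrisation of $K$ through a family $(f_i:L\to K)_{i\in I}$. Let $O:L\to L$ be an operator and $A$ an approximator of $O$ such that both $O$ and $A$ respect each $f_i$, and let $(x,y)$ be the $A$-well-founded fixpoint of $O$. Then: (1) for each $i\in I$, $(f_i(x),f_i(y))$ is the $A_{f_i}$-well-founded fixpoint of $O_{f_i}$; (2) if the $A_{f_i}$-well-founded fixpoint of $O_{f_i}$ is exact for every $i\in I$, then the $A$-well-founded fixpoint of $O$ is exact.
   Context: $L$ is a parametrisation of $K$ through $(f_i)_{i\in I}$ if each $f_i:L\to K$ is a surjective lattice morphism (i.e. $f_i(\bigvee X)=\bigvee f_i(X)$ and $f_i(\bigwedge X)=\bigwedge f_i(X)$ for all $X\subseteq L$) and for all $x,y\in L$: $x\leq y$ iff $f_i(x)\leq f_i(y)$ for all $i\in I$. $L^2$ carries the precision order $(x,y)\leq_p(u,v)$ iff $x\leq u$ and $v\leq y$; $(x,y)_1=x,(x,y)_2=y$; a pair $(x,y)$ is exact if $x=y$. An approximator of $O$ is a $\leq_p$-monotone $A:L^2\to L^2$ with $A(x,x)_1\leq O(x)\leq A(x,x)_2$ for all $x$, assumed symmetric ($A(x,y)_1=A(y,x)_2$). $O$ respects $f$ if $f(x)=f(y)$ implies $f(O(x))=f(O(y))$; $O_f$ is the unique operator with $O_f\circ f=f\circ O$. With $f^2(x,y)=(f(x),f(y))$, $A$ respects $f$ if $f^2(p)=f^2(q)$ implies $f^2(A(p))=f^2(A(q))$, and $A_f$ is the unique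 operator with $A_f\circ f^2=f^2\circ A$. For an operator $B$ on $M^2$ and $P$ on $M$, a partial $B$-stable fixpoint is $(x,y)$ with $x=\mathrm{lfp}(B(\cdot,y)_1)$, $y=\mathrm{lfp}(B(x,\cdot)_2)$; the $B$-well-founded fixpoint of $P$ is the $\leq_p$-least partial $B$-stable fixpoint. *)

theory Defs
  imports Main
begin

definition complete_lattice_morphism :: "('l::complete_lattice \<Rightarrow> 'k::complete_lattice) \<Rightarrow> bool" where
  "complete_lattice_morphism f \<longleftrightarrow>
     (\<forall>X. f (Sup X) = Sup (f ` X)) \<and> (\<forall>X. f (Inf X) = Inf (f ` X))"

definition parametrisation ::
  "'i set \<Rightarrow> ('i \<Rightarrow> 'l::complete_lattice \<Rightarrow> 'k::complete_lattice) \<Rightarrow> bool" where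
  "parametrisation I f \<longleftrightarrow>
     (\<forall>i\<in>I. surj (f i) \<and> complete_lattice_morphism (f i)) \<and>
     (\<forall>x y. x \<le> y \<longleftrightarrow> (\<forall>i\<in>I. f i x \<le> f i y))"

definition prec_le :: "'a::order \<times> 'a \<Rightarrow> 'a \<times> 'a \<Rightarrow> bool" where
  "prec_le p q \<longleftrightarrow> fst p \<le> fst q \<and> snd q \<le> snd p"

definition exact :: "'a \<times> 'a \<Rightarrow> bool" where
  "exact p \<longleftrightarrow> fst p = snd p"

definition approximator :: "('a::order \<times> 'a \<Rightarrow> 'a \<times> 'a) \<Rightarrow> ('a \<Rightarrow> 'a) \<Rightarrow> bool" where
  "approximator A Op \<longleftrightarrow>
     (\<forall>p q. prec_le p q \<longrightarrow> prec_le (A p) (A q)) \<and>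
     (\<forall>x. fst (A (x, x)) \<le> Op x \<and> Op x \<le> snd (A (x, x)))"

definition symmetric_approx :: "('a \<times> 'a \<Rightarrow> 'a \<times> 'a) \<Rightarrow> bool" where
  "symmetric_approx A \<longleftrightarrow> (\<forall>x y. fst (A (x, y)) = snd (A (y, x)))"

definition respects_op :: "('a \<Rightarrow> 'a) \<Rightarrow> ('a \<Rightarrow> 'b) \<Rightarrow> bool" where
  "respects_op Op f \<longleftrightarrow> (\<forall>x y. f x = f y \<longrightarrow> f (Op x) = f (Op y))"

definition induced_op :: "('a \<Rightarrow> 'a) \<Rightarrow> ('a \<Rightarrow> 'b) \<Rightarrow> ('b \<Rightarrow> 'b)" where
  "induced_op Op f = (THE P. P \<circ> f = f \<circ> Op)"

definition sq :: "('a \<Rightarrow> 'b) \<Rightarrow> 'a \<times> 'a \<Rightarrow> 'b \<times> 'b" where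
  "sq f p = (f (fst p), f (snd p))"

definition respects_approx :: "('a \<times> 'a \<Rightarrow> 'a \<times> 'a) \<Rightarrow> ('a \<Rightarrow> 'b) \<Rightarrow> bool" where
  "respects_approx A f \<longleftrightarrow> (\<forall>p q. sq f p = sq f q \<longrightarrow> sq f (A p) = sq f (A q))"

definition induced_approx :: "('a \<times> 'a \<Rightarrow> 'a \<times> 'a) \<Rightarrow> ('a \<Rightarrow> 'b) \<Rightarrow> ('b \<times> 'b \<Rightarrow> 'b \<times> 'b)" where
  "induced_approx A f = (THE B. B \<circ> sq f = sq f \<circ> A)"

definition partial_stable :: "('a::complete_lattice \<times> 'a \<Rightarrow> 'a \<times> 'a) \<Rightarrow> 'a \<times> 'a \<Rightarrow> bool" where
  "partial_stable B p \<longleftrightarrow>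
     fst p = lfp (\<lambda>u. fst (B (u, snd p))) \<and> snd p = lfp (\<lambda>v. snd (B (fst p, v)))"

definition wf_fixpoint :: "('a::complete_lattice \<times> 'a \<Rightarrow> 'a \<times> 'a) \<Rightarrow> 'a \<times> 'a \<Rightarrow> bool" where
  "wf_fixpoint B p \<longleftrightarrow> partial_stable B p \<and> (\<forall>q. partial_stable B q \<longrightarrow> prec_le p q)"

end

theory Submission
  imports Defs
begin

lemma clm_mono:
  assumes "complete_lattice_morphism f" "a \<le> b"
  shows "f a \<le> f b"
proof -
  have "f b = f (Sup {a, b})" using assms(2) by (simp add: sup_absorb2)
  also have "\<dots> = Sup {f a, f b}" using assms(1) unfolding complete_lattice_morphism_def by (metis image_insert image_empty)
  finally have "f b = sup (f a) (f b)" by simp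
  thus ?thesis by (metis sup.cobounded1)
qed

lemma clm_inf:
  assumes "complete_lattice_morphism f"
  shows "f (inf a b) = inf (f a) (f b)"
proof -
  have "f (Inf {a, b}) = Inf {f a, f b}" using assms unfolding complete_lattice_morphism_def by (metis image_insert image_empty)
  thus ?thesis by simp
qed

lemma lfp_transfer:
  fixes f :: "'l::complete_lattice \<Rightarrow> 'k::complete_lattice"
  assumes cm: "complete_lattice_morphism f" and su: "surj f" and mg: "mono g"
    and hf: "\<And>u. h (f u) = f (g u)"
  shows "f (lfp g) = lfp h"
proof -
  have mh: "mono h"
  proof (rule monoI)
    fix a b :: 'k assume ab: "a \<le> b"
    obtain u where u: "a = f u" using su by (metis surjD)
    obtain v where v: "b = f v" using su by (metis surjD)
    have "f (inf u v) = a" using clm_inf[OF cm] u v ab by (simp add: inf_absorb1)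
    hence "h a = f (g (inf u v))" using hf by metis
    also have "\<dots> \<le> f (g v)" using clm_mono[OF cm] mg by (simp add: monoD)
    also have "\<dots> = h b" using hf v by simp
    finally show "h a \<le> h b" .
  qed
  have "h (f (lfp g)) = f (lfp g)" using hf lfp_unfold[OF mg] by metis
  hence 1: "lfp h \<le> f (lfp g)" by (simp add: lfp_lowerbound)
  define u0 where "u0 = Sup {u. f u \<le> lfp h}"
  have fu0: "f u0 \<le> lfp h" unfolding u0_def using cm unfolding complete_lattice_morphism_def
    by (auto intro: Sup_least)
  have "f (g u0) \<le> lfp h"
  proof -
    have "f (g u0) = h (f u0)" using hf by simp
    also have "\<dots> \<le> h (lfp h)" using mh fu0 by (simp add: monoD)
    also have "\<dots> = lfp h" using lfp_unfold[OF mh] by simp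
    finally show ?thesis .
  qed
  hence "g u0 \<le> u0" unfolding u0_def by (simp add: Sup_upper)
  hence "lfp g \<le> u0" by (simp add: lfp_lowerbound)
  hence "f (lfp g) \<le> lfp h" using clm_mono[OF cm] fu0 order_trans by blast
  with 1 show ?thesis by simp
qed

lemma induced_approx_eq:
  fixes f :: "'a \<Rightarrow> 'b"
  assumes su: "surj f" and r: "respects_approx A f"
  shows "induced_approx A f (sq f p) = sq f (A p)"
proof -
  have ssu: "\<And>q. \<exists>p. sq f p = q"
  proof -
    fix q :: "'b \<times> 'b"
    obtain a where "fst q = f a" using su by (metis surjD)
    moreover obtain b where "snd q = f b" using su by (metis surjD)
    ultimately have "sq f (a, b) = q" unfolding sq_def by (metis fst_conv prod.collapse snd_conv)
    thus "\<exists>p. sq f p = q" by blast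
  qed
  define B0 where "B0 q = sq f (A (SOME p. sq f p = q))" for q
  have B0: "B0 \<circ> sq f = sq f \<circ> A"
  proof
    fix p
    have "sq f (SOME p'. sq f p' = sq f p) = sq f p" by (rule someI_ex) blast
    thus "(B0 \<circ> sq f) p = (sq f \<circ> A) p" using r unfolding B0_def respects_approx_def by (metis comp_apply)
  qed
  have "(THE B. B \<circ> sq f = sq f \<circ> A) = B0"
  proof (rule the_equality[where P="\<lambda>B. B \<circ> sq f = sq f \<circ> A", OF B0])
    fix B assume "B \<circ> sq f = sq f \<circ> A"
    hence "B \<circ> sq f = B0 \<circ> sq f" using B0 by simp
    show "B = B0"
    proof
      fix q obtain p where "sq f p = q" using ssu by blast
      thus "B q = B0 q" using \<open>B \<circ> sq f = B0 \<circ> sq f\<close> by (metis comp_apply)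
    qed
  qed
  thus ?thesis unfolding induced_approx_def using B0 by (metis comp_apply)
qed

lemma KT:
  fixes C :: "'a::complete_lattice \<Rightarrow> 'a"
  assumes anti: "\<And>a b. a \<le> b \<Longrightarrow> C b \<le> C a"
    and least: "\<And>p q. p = C q \<Longrightarrow> q = C p \<Longrightarrow> x \<le> p \<and> q \<le> y"
    and h1: "C v0 \<le> u0" and h2: "v0 \<le> C u0"
  shows "x \<le> u0 \<and> v0 \<le> y"
proof -
  define P where "P = {(u,v). C v \<le> u \<and> v \<le> C u}"
  define m1 where "m1 = Inf (fst ` P)"
  define m2 where "m2 = Sup (snd ` P)"
  have lb: "m1 \<le> u \<and> v \<le> m2" if "(u,v) \<in> P" for u v
    unfolding m1_def m2_def using that by (force intro: Inf_lower Sup_upper)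
  have a: "C m2 \<le> m1" unfolding m1_def
  proof (rule Inf_greatest)
    fix u assume "u \<in> fst ` P"
    then obtain v where uv: "(u,v) \<in> P" by force
    hence "C m2 \<le> C v" using lb anti by blast
    also have "\<dots> \<le> u" using uv unfolding P_def by simp
    finally show "C m2 \<le> u" .
  qed
  have b: "m2 \<le> C m1" unfolding m2_def
  proof (rule Sup_least)
    fix v assume "v \<in> snd ` P"
    then obtain u where uv: "(u,v) \<in> P" by force
    hence "v \<le> C u" unfolding P_def by simp
    also have "\<dots> \<le> C m1" using lb anti uv by blast
    finally show "v \<le> C m1" .
  qed
  have "(C m2, C m1) \<in> P" unfolding P_def using anti a b by auto
  hence "m1 \<le> C m2 \<and> C m1 \<le> m2" using lb by blast
  hence "m1 = C m2" "m2 = C m1" using a b by (auto intro: antisym)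
  hence "x \<le> m1 \<and> m2 \<le> y" using least by blast
  moreover have "(u0, v0) \<in> P" unfolding P_def using h1 h2 by simp
  ultimately show ?thesis using lb by (meson order_trans)
qed


theorem theorem3p6:
  fixes I :: "'i set"
    and f :: "'i \<Rightarrow> 'l::complete_lattice \<Rightarrow> 'k::complete_lattice"
    and Op :: "'l \<Rightarrow> 'l"
    and A :: "'l \<times> 'l \<Rightarrow> 'l \<times> 'l"
    and x y :: 'l
  assumes "parametrisation I f"
    and "approximator A Op"
    and "symmetric_approx A"
    and "\<forall>i\<in>I. respects_op Op (f i)"
    and "\<forall>i\<in>I. respects_approx A (f i)"
    and "wf_fixpoint A (x, y)"
  shows "(\<forall>i\<in>I. wf_fixpoint (induced_approx A (f i)) (f i x, f i y))
     \<and> ((\<forall>i\<in>I. \<forall>p. wf_fixpoint (induced_approx A (f i)) p \<longrightarrow> exact p) \<longrightarrow> exact (x, y))"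
proof -
  have Amono: "\<And>u u' v v'. u \<le> u' \<Longrightarrow> v' \<le> v \<Longrightarrow>
      fst (A (u,v)) \<le> fst (A (u',v')) \<and> snd (A (u',v')) \<le> snd (A (u,v))"
    using assms(2) unfolding approximator_def prec_le_def by (metis fst_conv snd_conv)
  have Asym: "\<And>u v. snd (A (u,v)) = fst (A (v,u))"
    using assms(3) unfolding symmetric_approx_def by metis
  define CA where "CA v = lfp (\<lambda>w. fst (A (w,v)))" for v
  have CAanti: "CA b \<le> CA a" if "a \<le> b" for a b
    unfolding CA_def by (rule lfp_mono) (use Amono that in blast)
  have psA: "partial_stable A (p,q) \<longleftrightarrow> p = CA q \<and> q = CA p" for p q
    unfolding partial_stable_def CA_def by (simp add: Asym)
  have xy: "x = CA y \<and> y = CA x" using assms(6) psA[of x y] unfolding wf_fixpoint_def by blast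
  have leastA: "x \<le> p \<and> q \<le> y" if "p = CA q" "q = CA p" for p q
  proof -
    have "partial_stable A (p,q)" using psA[of p q] that by blast
    thus ?thesis using assms(6) unfolding wf_fixpoint_def prec_le_def by fastforce
  qed
  have part1: "wf_fixpoint (induced_approx A (f i)) (f i x, f i y)" if i: "i \<in> I" for i
  proof -
    define F where "F = f i"
    define B where "B = induced_approx A F"
    have cm: "complete_lattice_morphism F" and su: "surj F"
      using assms(1) i unfolding parametrisation_def F_def by auto
    have B1: "B (F u, F v) = (F (fst (A (u,v))), F (snd (A (u,v))))" for u v
      using induced_approx_eq[OF su, of A "(u,v)"] assms(5) i
      unfolding B_def F_def sq_def by simp
    have pre: "\<exists>u. a = F u" for a using su by (metis surjD)
    have Bsym: "snd (B (a,b)) = fst (B (b,a))" for a b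
    proof -
      obtain u v where "a = F u" "b = F v" using pre by metis
      thus ?thesis using B1 Asym by simp
    qed
    define CB where "CB b = lfp (\<lambda>a. fst (B (a,b)))" for b
    have CBanti: "CB b \<le> CB b'" if "b' \<le> b" for b b'
      unfolding CB_def
    proof (rule lfp_mono)
      fix w
      obtain u v v' where uv: "w = F u" "b' = F v" "b = F v'" using pre by metis
      have "F (inf v v') = b'" using clm_inf[OF cm] uv that by (simp add: inf_absorb1)
      have "fst (B (w,b)) = F (fst (A (u,v')))" using B1 uv by simp
      also have "\<dots> \<le> F (fst (A (u, inf v v')))" using clm_mono[OF cm] Amono by simp
      also have "\<dots> = fst (B (w,b'))" using B1[of u "inf v v'"] uv \<open>F (inf v v') = b'\<close> by simp
      finally show "fst (B (w,b)) \<le> fst (B (w,b'))" .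
    qed
    have T: "F (CA v) = CB (F v)" for v
      unfolding CA_def CB_def
    proof (rule lfp_transfer[OF cm su])
      show "mono (\<lambda>w. fst (A (w, v)))" by (rule monoI) (use Amono in blast)
      show "fst (B (F u, F v)) = F (fst (A (u, v)))" for u using B1 by simp
    qed
    have psB: "partial_stable B (p,q) \<longleftrightarrow> p = CB q \<and> q = CB p" for p q
      unfolding partial_stable_def CB_def by (simp add: Bsym)
    have ps: "partial_stable B (F x, F y)" using psB[of "F x" "F y"] T xy by metis
    have least: "prec_le (F x, F y) (a,b)" if "partial_stable B (a,b)" for a b
    proof -
      have ab: "a = CB b" "b = CB a" using that psB[of a b] by blast+
      define u0 where "u0 = Sup {u. F u \<le> a}"
      define v0 where "v0 = Inf {v. b \<le> F v}"
      have fu0: "F u0 \<le> a" unfolding u0_def using cm unfolding complete_lattice_morphism_def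
        by (auto intro: Sup_least)
      have fv0: "b \<le> F v0" unfolding v0_def using cm unfolding complete_lattice_morphism_def
        by (auto intro: Inf_greatest)
      have "F (CA v0) \<le> a" using T CBanti fv0 ab by metis
      hence h1: "CA v0 \<le> u0" unfolding u0_def by (simp add: Sup_upper)
      have "b \<le> F (CA u0)" using T CBanti fu0 ab by metis
      hence h2: "v0 \<le> CA u0" unfolding v0_def by (simp add: Inf_lower)
      have "x \<le> u0 \<and> v0 \<le> y" by (rule KT[OF CAanti leastA h1 h2])
      hence "F x \<le> F u0" "F v0 \<le> F y" using clm_mono[OF cm] by auto
      thus ?thesis unfolding prec_le_def using fu0 fv0 by auto
    qed
    show ?thesis unfolding wf_fixpoint_def using ps least unfolding B_def F_def by auto
  qed
  moreover have "exact (x,y)" if H: "\<forall>i\<in>I. \<forall>p. wf_fixpoint (induced_approx A (f i)) p \<longrightarrow> exact p"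
  proof -
    have "\<forall>i\<in>I. f i x = f i y" using H part1 unfolding exact_def by fastforce
    hence "x \<le> y" "y \<le> x" using assms(1) unfolding parametrisation_def by auto
    thus ?thesis unfolding exact_def by simp
  qed
  ultimately show ?thesis by blast
qed

end
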